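(* Let $G$ be an oriented graph derived from a Burling tree $(T,r,\ell,c)$, let $H$ be a hole of $G$, let $p$ be the pivot of $H$, and let $C$ be the connected component of $G\setminus N^-[p]$ that contains $H\setminus N^-[p]$. Then every vertex of $C$ is a descendant of $p$ in $T$.
   Context: Graphs are finite, without loops or multiple edges; oriented graphs have no pair of opposite arcs; connectivity of an oriented graph refers to its underlying graph. In a rooted tree $T$ with root $r$, each non-root vertex $v$ has a parent $p(v)$; children, leaves, ancestors and descendants are as usual (every vertex is an ancestor and a descendant of itself). A branch is a sequence $v_1\dots v_k$ ($k\ge0$) with $v_i$ the parent of $v_{i+1}$; it starts at $v_1$. A Burling tree is a 4-tuple $(T,r,\ell,c)$: $T$ a rooted tree with root $r$; $\ell$ assigns to each non-leaf vertex $v$ one of its children $\ell(v)$ (the last-born of $v$); $c$ assigns to every vertex $v$ that is neither the root nor a last-born the vertex-set of a (possibly empty) branch starting at $\ell(p(v))$, and $c(v)=\emptyset$ if $v$ is the root or a last-born. The oriented graph fully derived from it has vertex-set $V(T)$ and an arc $uv$ iff $v\in c(u)$; an oriented graph is derived from the Burling tree if it is an induced subgraph of the fully derived one. $N^-[v]$ denotes $v$ together with its in-neighbors. A hole of an oriented graph is an induced cycle of length at least $4$ of its underlying graph. If $G$ is derived from $T$ and $H$ is a hole of $G$, then (as established in the paper) $H$ with the inherited orientation has exactly two sources, called its antennas, and exactly two sinks; exactly one of these sinks is adjacent to both antennas and is an ancestor in $T$ of all vertices of $H$ other than the antennas: it is the pivot of $H$; the other sink is the bottom of $H$. *)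

theory Defs
  imports Main
begin

text \<open>Rooted tree on a finite vertex set V with root r and parent function par
  (par r is irrelevant). Every vertex reaches the root by iterating par.\<close>
definition rooted_tree :: "'a set \<Rightarrow> 'a \<Rightarrow> ('a \<Rightarrow> 'a) \<Rightarrow> bool" where
  "rooted_tree V r par \<longleftrightarrow> finite V \<and> r \<in> V \<and> (\<forall>v \<in> V - {r}. par v \<in> V)
     \<and> (\<forall>v \<in> V. \<exists>k. (par ^^ k) v = r)"

text \<open>u is an ancestor of v (v a descendant of u); every vertex is its own ancestor.\<close>
definition anc :: "'a set \<Rightarrow> 'a \<Rightarrow> ('a \<Rightarrow> 'a) \<Rightarrow> 'a \<Rightarrow> 'a \<Rightarrow> bool" where
  "anc V r par u v \<longleftrightarrow> v \<in> V \<and> (\<exists>k. (\<forall>i<k. (par ^^ i) v \<noteq> r) \<and> (par ^^ k) v = u)"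

definition children :: "'a set \<Rightarrow> 'a \<Rightarrow> ('a \<Rightarrow> 'a) \<Rightarrow> 'a \<Rightarrow> 'a set" where
  "children V r par v = {u \<in> V - {r}. par u = v}"

definition branch_set :: "'a set \<Rightarrow> 'a \<Rightarrow> ('a \<Rightarrow> 'a) \<Rightarrow> 'a \<Rightarrow> 'a set \<Rightarrow> bool" where
  "branch_set V r par s B \<longleftrightarrow>
     B = {} \<or> (\<exists>d. anc V r par s d \<and> B = {w. anc V r par s w \<and> anc V r par w d})"

definition burling_tree ::
  "'a set \<Rightarrow> 'a \<Rightarrow> ('a \<Rightarrow> 'a) \<Rightarrow> ('a \<Rightarrow> 'a) \<Rightarrow> ('a \<Rightarrow> 'a set) \<Rightarrow> bool" where
  "burling_tree V r par l c \<longleftrightarrow> rooted_tree V r par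
     \<and> (\<forall>v \<in> V. children V r par v \<noteq> {} \<longrightarrow> l v \<in> children V r par v)
     \<and> (\<forall>v \<in> V. (v = r \<or> l (par v) = v) \<longrightarrow> c v = {})
     \<and> (\<forall>v \<in> V - {r}. l (par v) \<noteq> v \<longrightarrow> branch_set V r par (l (par v)) (c v))"

text \<open>The oriented graph derived from the Burling tree with vertex set S \<subseteq> V
  (induced subgraph of the fully derived graph): arc u v iff v \<in> c u.\<close>
definition arc :: "('a \<Rightarrow> 'a set) \<Rightarrow> 'a set \<Rightarrow> 'a \<Rightarrow> 'a \<Rightarrow> bool" where
  "arc c S u v \<longleftrightarrow> u \<in> S \<and> v \<in> S \<and> v \<in> c u"

definition adj :: "('a \<Rightarrow> 'a set) \<Rightarrow> 'a set \<Rightarrow> 'a \<Rightarrow> 'a \<Rightarrow> bool" where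
  "adj c S u v \<longleftrightarrow> arc c S u v \<or> arc c S v u"

definition is_hole :: "('a \<Rightarrow> 'a set) \<Rightarrow> 'a set \<Rightarrow> 'a set \<Rightarrow> bool" where
  "is_hole c S H \<longleftrightarrow> H \<subseteq> S \<and> (\<exists>xs. distinct xs \<and> set xs = H \<and> length xs \<ge> 4 \<and>
     (\<forall>i < length xs. \<forall>j < length xs.
        adj c S (xs ! i) (xs ! j) \<longleftrightarrow> (j = Suc i mod length xs \<or> i = Suc j mod length xs)))"

definition source_in :: "('a \<Rightarrow> 'a set) \<Rightarrow> 'a set \<Rightarrow> 'a set \<Rightarrow> 'a \<Rightarrow> bool" where
  "source_in c S H v \<longleftrightarrow> v \<in> H \<and> \<not> (\<exists>u \<in> H. arc c S u v)"

definition sink_in :: "('a \<Rightarrow> 'a set) \<Rightarrow> 'a set \<Rightarrow> 'a set \<Rightarrow> 'a \<Rightarrow> bool" where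
  "sink_in c S H v \<longleftrightarrow> v \<in> H \<and> \<not> (\<exists>w \<in> H. arc c S v w)"

text \<open>Pivot of a hole H: the sink adjacent to both antennas (the sources of H) that is
  an ancestor of all vertices of H other than the antennas.\<close>
definition is_pivot ::
  "'a set \<Rightarrow> 'a \<Rightarrow> ('a \<Rightarrow> 'a) \<Rightarrow> ('a \<Rightarrow> 'a set) \<Rightarrow> 'a set \<Rightarrow> 'a set \<Rightarrow> 'a \<Rightarrow> bool" where
  "is_pivot V r par c S H p \<longleftrightarrow> sink_in c S H p
     \<and> (\<forall>a. source_in c S H a \<longrightarrow> adj c S p a)
     \<and> (\<forall>v \<in> H. \<not> source_in c S H v \<longrightarrow> anc V r par p v)"

definition closed_in_nbhd :: "('a \<Rightarrow> 'a set) \<Rightarrow> 'a set \<Rightarrow> 'a \<Rightarrow> 'a set" where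
  "closed_in_nbhd c S p = insert p {u. arc c S u p}"

definition is_component :: "('a \<Rightarrow> 'a set) \<Rightarrow> 'a set \<Rightarrow> 'a set \<Rightarrow> 'a set \<Rightarrow> bool" where
  "is_component c S X C \<longleftrightarrow>
     (\<exists>x \<in> X. C = {y. (\<lambda>u v. u \<in> X \<and> v \<in> X \<and> adj c S u v)\<^sup>*\<^sup>* x y})"

end

theory Submission
  imports Defs
begin

lemma iter_in_V:
  assumes "rooted_tree V r par" "x \<in> V" "\<forall>i<k. (par ^^ i) x \<noteq> r"
  shows "(par ^^ k) x \<in> V"
  using assms(3)
proof (induction k)
  case 0 then show ?case using assms(2) by simp
next
  case (Suc k)
  then have "(par ^^ k) x \<in> V" "(par ^^ k) x \<noteq> r" by auto
  then show ?case using assms(1) unfolding rooted_tree_def by auto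
qed

lemma anc_refl: "p \<in> V \<Longrightarrow> anc V r par p p"
  unfolding anc_def by (rule conjI, simp, rule exI[of _ 0], simp)

lemma anc_par:
  assumes "rooted_tree V r par" "anc V r par p u" "u \<noteq> p"
  shows "anc V r par p (par u)"
proof -
  obtain k where u: "u \<in> V" and k: "\<forall>i<k. (par ^^ i) u \<noteq> r" "(par ^^ k) u = p"
    using assms(2) unfolding anc_def by blast
  have "k \<noteq> 0" using k assms(3) by (metis funpow_0)
  then obtain m where m: "k = Suc m" by (cases k) auto
  have ur: "u \<noteq> r" using k(1) m by (metis funpow_0 zero_less_Suc)
  have "par u \<in> V" using assms(1) u ur unfolding rooted_tree_def by auto
  moreover have "\<forall>i<m. (par ^^ i) (par u) \<noteq> r"
    using k(1) m by (metis Suc_mono funpow_Suc_right o_apply)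
  moreover have "(par ^^ m) (par u) = p" using k(2) m by (metis funpow_Suc_right o_apply)
  ultimately show ?thesis unfolding anc_def by blast
qed

lemma anc_child:
  assumes "anc V r par p (par y)" "y \<in> V" "y \<noteq> r"
  shows "anc V r par p y"
proof -
  obtain k where k: "\<forall>i<k. (par ^^ i) (par y) \<noteq> r" "(par ^^ k) (par y) = p"
    using assms(1) unfolding anc_def by blast
  have "\<forall>i<Suc k. (par ^^ i) y \<noteq> r"
  proof (intro allI impI)
    fix i assume "i < Suc k"
    then show "(par ^^ i) y \<noteq> r"
      using k(1) assms(3) by (cases i) (auto simp: funpow_Suc_right simp del: funpow.simps)
  qed
  moreover have "(par ^^ Suc k) y = p" using k(2) by (simp add: funpow_Suc_right del: funpow.simps)
  ultimately show ?thesis using assms(2) unfolding anc_def by blast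
qed

lemma anc_trans:
  assumes "anc V r par a b" "anc V r par b x"
  shows "anc V r par a x"
proof -
  obtain k1 where k1: "\<forall>i<k1. (par ^^ i) b \<noteq> r" "(par ^^ k1) b = a"
    using assms(1) unfolding anc_def by blast
  obtain k2 where x: "x \<in> V" and k2: "\<forall>i<k2. (par ^^ i) x \<noteq> r" "(par ^^ k2) x = b"
    using assms(2) unfolding anc_def by blast
  have "\<forall>i<k1+k2. (par ^^ i) x \<noteq> r"
  proof (intro allI impI)
    fix i assume i: "i < k1 + k2"
    show "(par ^^ i) x \<noteq> r"
    proof (cases "i < k2")
      case True then show ?thesis using k2 by auto
    next
      case False
      then have "i = (i - k2) + k2" "i - k2 < k1" using i by auto
      then have "(par ^^ i) x = (par ^^ (i - k2)) b"
        using k2(2) by (metis funpow_add o_apply)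
      then show ?thesis using k1(1) \<open>i - k2 < k1\<close> by auto
    qed
  qed
  moreover have "(par ^^ (k1 + k2)) x = a" using k1 k2 by (simp add: funpow_add)
  ultimately show ?thesis using x unfolding anc_def by blast
qed

lemma anc_comparable:
  assumes "rooted_tree V r par" "anc V r par s x" "anc V r par p x"
  shows "anc V r par s p \<or> anc V r par p s"
proof -
  obtain k1 where x: "x \<in> V" and k1: "\<forall>i<k1. (par ^^ i) x \<noteq> r" "(par ^^ k1) x = s"
    using assms(2) unfolding anc_def by blast
  obtain k2 where k2: "\<forall>i<k2. (par ^^ i) x \<noteq> r" "(par ^^ k2) x = p"
    using assms(3) unfolding anc_def by blast
  show ?thesis
  proof (cases "k1 \<le> k2")
    case True
    have sV: "s \<in> V" using iter_in_V[OF assms(1) x k1(1)] k1(2) by simp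
    have "\<forall>i<k2-k1. (par ^^ i) s \<noteq> r"
    proof (intro allI impI)
      fix i assume "i < k2 - k1"
      then have "(par ^^ i) s = (par ^^ (i + k1)) x" "i + k1 < k2"
        using k1(2) True by (auto simp: funpow_add)
      then show "(par ^^ i) s \<noteq> r" using k2(1) by auto
    qed
    moreover have "(par ^^ (k2 - k1)) s = p"
      using k1(2) k2(2) True by (metis funpow_add le_add_diff_inverse2 o_apply)
    ultimately show ?thesis using sV unfolding anc_def by blast
  next
    case False
    have pV: "p \<in> V" using iter_in_V[OF assms(1) x k2(1)] k2(2) by simp
    have "\<forall>i<k1-k2. (par ^^ i) p \<noteq> r"
    proof (intro allI impI)
      fix i assume "i < k1 - k2"
      then have "(par ^^ i) p = (par ^^ (i + k2)) x" "i + k2 < k1"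
        using k2(2) False by (auto simp: funpow_add)
      then show "(par ^^ i) p \<noteq> r" using k1(1) by auto
    qed
    moreover have "(par ^^ (k1 - k2)) p = s"
      using k1(2) k2(2) False by (metis funpow_add le_add_diff_inverse2 o_apply nat_le_linear)
    ultimately show ?thesis using pV unfolding anc_def by blast
  qed
qed

lemma arc_desc:
  assumes bt: "burling_tree V r par l c" and "u \<in> V" and "v \<in> c u"
  shows "\<exists>s d. s \<in> V - {r} \<and> par s = par u \<and> u \<noteq> r \<and> par u \<in> V
     \<and> anc V r par s d \<and> c u = {w. anc V r par s w \<and> anc V r par w d}"
proof -
  have rt: "rooted_tree V r par" using bt unfolding burling_tree_def by blast
  have ur: "u \<noteq> r" and lu: "l (par u) \<noteq> u"
    using bt assms(2,3) unfolding burling_tree_def by fastforce+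
  have pu: "par u \<in> V" using rt ur assms(2) unfolding rooted_tree_def by blast
  have "u \<in> children V r par (par u)" using ur assms(2) unfolding children_def by blast
  then have "l (par u) \<in> children V r par (par u)"
    using bt pu unfolding burling_tree_def by blast
  then have s: "l (par u) \<in> V - {r}" "par (l (par u)) = par u" unfolding children_def by auto
  have "branch_set V r par (l (par u)) (c u)"
    using bt assms(2) ur lu unfolding burling_tree_def by blast
  then obtain d where "anc V r par (l (par u)) d"
    "c u = {w. anc V r par (l (par u)) w \<and> anc V r par w d}"
    using assms(3) unfolding branch_set_def by blast
  then show ?thesis using s ur pu by blast
qed

lemma edge_step:
  assumes bt: "burling_tree V r par l c" and SV: "S \<subseteq> V" and pS: "p \<in> S"
    and X: "X = S - closed_in_nbhd c S p"
    and uX: "u \<in> X" and vX: "v \<in> X" and a: "adj c S u v" and pu: "anc V r par p u"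
  shows "anc V r par p v"
proof -
  have rt: "rooted_tree V r par" using bt unfolding burling_tree_def by blast
  have up: "u \<noteq> p" using uX X unfolding closed_in_nbhd_def by auto
  have uV: "u \<in> V" "v \<in> V" using uX vX X SV by auto
  show ?thesis
  proof (cases "v \<in> c u")
    case True
    from arc_desc[OF bt uV(1) True] obtain s d where sd: "s \<in> V - {r}" "par s = par u"
      "anc V r par s d" "c u = {w. anc V r par s w \<and> anc V r par w d}" by blast
    have "anc V r par p (par u)" using anc_par[OF rt pu up] .
    then have "anc V r par p s" using anc_child[of V r par p s] sd by auto
    moreover have "anc V r par s v" using True sd(4) by auto
    ultimately show ?thesis using anc_trans by metis
  next
    case False
    then have uc: "u \<in> c v" using a unfolding adj_def arc_def by blast
    from arc_desc[OF bt uV(2) uc] obtain s d where sd: "s \<in> V - {r}" "par s = par v"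
      "anc V r par s d" "c v = {w. anc V r par s w \<and> anc V r par w d}" "v \<noteq> r" by blast
    have su: "anc V r par s u" "anc V r par u d" using uc sd(4) by auto
    have pd: "anc V r par p d" using anc_trans[OF pu su(2)] .
    have notarc: "p \<notin> c v" using vX X pS unfolding closed_in_nbhd_def arc_def by auto
    from anc_comparable[OF rt su(1) pu] show ?thesis
    proof
      assume "anc V r par s p"
      then have "p \<in> c v" using sd(4) pd by auto
      then show ?thesis using notarc by blast
    next
      assume ps: "anc V r par p s"
      show ?thesis
      proof (cases "s = p")
        case True
        then have "p \<in> c v" using sd(4) pd anc_refl[of p V r par] SV pS by auto
        then show ?thesis using notarc by blast
      next
        case False
        have "anc V r par p (par v)" using anc_par[OF rt ps False] sd(2) by simp
        then show ?thesis using anc_child sd(5) uV(2) by metis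
      qed
    qed
  qed
qed

lemma hole_vertex:
  assumes "is_hole c S H" and "is_pivot V r par c S H p"
  shows "\<exists>z \<in> H. z \<in> S - closed_in_nbhd c S p \<and> anc V r par p z"
proof -
  obtain xs where xs: "distinct xs" "set xs = H" "length xs \<ge> 4" and
    ad: "\<forall>i < length xs. \<forall>j < length xs.
        adj c S (xs ! i) (xs ! j) \<longleftrightarrow> (j = Suc i mod length xs \<or> i = Suc j mod length xs)"
    and HS: "H \<subseteq> S"
    using assms(1) unfolding is_hole_def by blast
  define n where "n = length xs"
  have pH: "p \<in> H" using assms(2) unfolding is_pivot_def sink_in_def by blast
  then obtain j where j: "j < n" "xs ! j = p" using xs(2) unfolding n_def by (metis in_set_conv_nth)
  define k where "k = (j + 2) mod n"
  have n4: "n \<ge> 4" using xs(3) n_def by simp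
  have k: "k < n" using n4 unfolding k_def by simp
  have c1: "k \<noteq> Suc j mod n" and c2: "j \<noteq> Suc k mod n" and c3: "k \<noteq> j"
  proof -
    have "Suc j mod n = (if j + 1 < n then j + 1 else 0)" using j(1) by (auto simp: mod_if)
    moreover have "k = (if j + 2 < n then j + 2 else j + 2 - n)" unfolding k_def using j(1) n4
      by (simp add: mod_if)
    moreover have "Suc k mod n = (if k + 1 < n then k + 1 else 0)" using k by (auto simp: mod_if)
    ultimately show "k \<noteq> Suc j mod n" "j \<noteq> Suc k mod n" "k \<noteq> j" using j(1) n4 k
      by (auto split: if_splits)
  qed
  define z where "z = xs ! k"
  have nadj: "\<not> adj c S p z" using ad j k c1 c2 unfolding z_def n_def by auto
  have nadj2: "\<not> adj c S z p" using nadj unfolding adj_def by blast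
  have zH: "z \<in> H" using k xs(2) unfolding z_def n_def by auto
  have zp: "z \<noteq> p" using xs(1) j k c3 unfolding z_def n_def by (metis nth_eq_iff_index_eq)
  have "\<not> source_in c S H z" using assms(2) nadj unfolding is_pivot_def by blast
  then have "anc V r par p z" using assms(2) zH unfolding is_pivot_def by blast
  moreover have "z \<notin> closed_in_nbhd c S p" using zp nadj2 unfolding closed_in_nbhd_def adj_def by auto
  ultimately show ?thesis using zH HS by blast
qed

theorem lemma6p1:
  assumes "burling_tree V r par l c"
    and "S \<subseteq> V"
    and "is_hole c S H"
    and "is_pivot V r par c S H p"
    and "is_component c S (S - closed_in_nbhd c S p) C"
    and "H - closed_in_nbhd c S p \<subseteq> C"
  shows "\<forall>v \<in> C. anc V r par p v"
proof
  define X where "X = S - closed_in_nbhd c S p"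
  define R where "R = (\<lambda>u v. u \<in> X \<and> v \<in> X \<and> adj c S u v)"
  have symR: "\<And>u v. R u v \<Longrightarrow> R v u" unfolding R_def adj_def by blast
  obtain x0 where C: "C = {y. R\<^sup>*\<^sup>* x0 y}"
    using assms(5) unfolding is_component_def R_def X_def by blast
  obtain z where z: "z \<in> H" "z \<in> X" "anc V r par p z"
    using hole_vertex[OF assms(3,4)] unfolding X_def by blast
  have "z \<in> C" using assms(6) z unfolding X_def by blast
  then have "R\<^sup>*\<^sup>* x0 z" using C by simp
  then have "(R\<inverse>\<inverse>)\<^sup>*\<^sup>* z x0" by (simp add: rtranclp_conversep)
  moreover have "R\<inverse>\<inverse> = R" using symR by (auto intro!: ext)
  ultimately have zx: "R\<^sup>*\<^sup>* z x0" by simp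
  have pS: "p \<in> S" using assms(3,4) unfolding is_hole_def is_pivot_def sink_in_def by blast
  fix v assume "v \<in> C"
  then have "R\<^sup>*\<^sup>* z v" using zx C by auto
  then show "anc V r par p v"
  proof (induction rule: rtranclp_induct)
    case base then show ?case using z by simp
  next
    case (step y w)
    then show ?case using edge_step[OF assms(1,2) pS X_def] unfolding R_def by blast
  qed
qed

end
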